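(* Let $P_A$ and $P_B$ be convex $M$-polyforms and let $T$ be a DC-tiling of $P_B$ by $P_A$ with tiles $P_1,\dots,P_k$. Put $\Gamma_B=\mathbb{Z}^2\cap P_B$, $\Gamma_i=\mathbb{Z}^2\cap P_i$ and $\partial^T\Gamma_B=\Gamma_B\setminus\bigcup_i\Gamma_i$. Then removing the vertices of $\partial^T\Gamma_B$ splits $\Gamma_B$ into the mutually disconnected parts $\Gamma_1,\dots,\Gamma_k$: for $i\neq j$, no vertex of $\Gamma_i$ is adjacent (in $\mathbb{Z}^2$) to a vertex of $\Gamma_j$.
   Context: Let $M$ be the tiling of $\mathbb{R}^2$ in which each closed unit square $[a,a+1]\times[b,b+1]$, $a,b\in\mathbb{Z}$, is cut by its two diagonals into four isosceles triangles (base $1$, height $\tfrac12$, apex at the square's center). An $M$-polyform is a finite connected set of triangles of $M$, identified with the open interior of their union; it is convex if this open set is convex. Automorphisms of $M$ are the maps $x\mapsto Ax+t$ with $A$ a $2\times2$ signed permutation matrix and $t\in\mathbb{Z}^2$. $P^{DC}$ denotes $P$ with a direction and a color assigned to each of its sides, distinct sides receiving distinct colors. A DC-tiling of $P_B$ by $P_A$ is a tiling of $P_B$ by finitely many images of $P_A^{DC}$ under automorphisms of $M$ (open tiles, pairwise disjoint, closures covering the closure of $P_B$, carrying the transported directions and colors) such that every common edge of two adjacent tiles has the same color and direction in both tiles. *)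

theory Defs
  imports "HOL-Analysis.Analysis"
begin

definition pt :: "real \<Rightarrow> real \<Rightarrow> real^2" where
  "pt x y = vector [x, y]"

text \<open>The closed triangle of the tiling M in the unit square [a,a+1]x[b,b+1]:
  d = 0 bottom, 1 right, 2 top, 3 left; apex at the centre of the square.\<close>
definition M_triangle :: "int \<Rightarrow> int \<Rightarrow> nat \<Rightarrow> (real^2) set" where
  "M_triangle a b d =
     (let c = pt (real_of_int a + 1/2) (real_of_int b + 1/2);
          p00 = pt (real_of_int a) (real_of_int b);
          p10 = pt (real_of_int a + 1) (real_of_int b);
          p11 = pt (real_of_int a + 1) (real_of_int b + 1);
          p01 = pt (real_of_int a) (real_of_int b + 1)
      in convex hull (if d = 0 then {p00, p10, c}
                      else if d = 1 then {p10, p11, c}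
                      else if d = 2 then {p11, p01, c}
                      else {p01, p00, c}))"

definition M_triangles :: "(real^2) set set" where
  "M_triangles = {M_triangle a b d | a b d. d < 4}"

definition M_polyform :: "(real^2) set \<Rightarrow> bool" where
  "M_polyform P \<longleftrightarrow> (\<exists>F. finite F \<and> F \<noteq> {} \<and> F \<subseteq> M_triangles \<and>
       connected (interior (\<Union>F)) \<and> P = interior (\<Union>F))"

definition convex_M_polyform :: "(real^2) set \<Rightarrow> bool" where
  "convex_M_polyform P \<longleftrightarrow> M_polyform P \<and> convex P"

definition lattice_point :: "real^2 \<Rightarrow> bool" where
  "lattice_point x \<longleftrightarrow> (\<forall>i. x $ i \<in> \<int>)"

definition signed_perm_matrix :: "real^2^2 \<Rightarrow> bool" where
  "signed_perm_matrix A \<longleftrightarrow>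
     (\<exists>p s. p permutes (UNIV :: 2 set) \<and> (\<forall>i. s i = 1 \<or> s i = -1) \<and>
            (\<forall>i j. A $ i $ j = (if j = p i then s i else 0)))"

definition M_automorphism :: "(real^2 \<Rightarrow> real^2) \<Rightarrow> bool" where
  "M_automorphism f \<longleftrightarrow>
     (\<exists>A t. signed_perm_matrix A \<and> lattice_point t \<and> f = (\<lambda>x. A *v x + t))"

definition polygon_sides :: "(real^2) set \<Rightarrow> (real^2) set set" where
  "polygon_sides P = {S. S face_of closure P \<and> aff_dim S = 1}"

definition DC_data :: "(real^2) set \<Rightarrow> ((real^2) set \<Rightarrow> (real^2) \<times> (real^2))
                          \<Rightarrow> ((real^2) set \<Rightarrow> 'c) \<Rightarrow> bool" where
  "DC_data P dirn col \<longleftrightarrow>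
     (\<forall>s\<in>polygon_sides P. s = closed_segment (fst (dirn s)) (snd (dirn s))) \<and>
     inj_on col (polygon_sides P)"

definition DC_tiling :: "(real^2) set \<Rightarrow> ((real^2) set \<Rightarrow> (real^2) \<times> (real^2))
     \<Rightarrow> ((real^2) set \<Rightarrow> 'c) \<Rightarrow> (real^2) set \<Rightarrow> nat \<Rightarrow> (nat \<Rightarrow> real^2 \<Rightarrow> real^2) \<Rightarrow> bool" where
  "DC_tiling PA dirn col PB k g \<longleftrightarrow>
     DC_data PA dirn col \<and>
     (\<forall>i<k. M_automorphism (g i)) \<and>
     (\<forall>i<k. \<forall>j<k. i \<noteq> j \<longrightarrow> g i ` PA \<inter> g j ` PA = {}) \<and>
     (\<Union>i<k. closure (g i ` PA)) = closure PB \<and>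
     (\<forall>i<k. \<forall>j<k. i \<noteq> j \<longrightarrow>
        (\<forall>s\<in>polygon_sides PA. \<forall>s'\<in>polygon_sides PA.
           aff_dim (g i ` s \<inter> g j ` s') = 1 \<longrightarrow>
             col s = col s' \<and>
             (\<exists>c>0. g i (snd (dirn s)) - g i (fst (dirn s)) =
                    c *\<^sub>R (g j (snd (dirn s')) - g j (fst (dirn s'))))))"

definition lattice_pts :: "(real^2) set \<Rightarrow> (real^2) set" where
  "lattice_pts S = {x \<in> S. lattice_point x}"

end

theory Submission imports Defs begin

definition Ccl :: "int \<Rightarrow> int \<Rightarrow> nat \<Rightarrow> (real^2) set" where
  "Ccl a b d = {q. (if d=0 then 0 \<le> q$2 - b \<and> q$2 - b \<le> q$1 - a \<and> q$2 - b \<le> 1 - (q$1 - a)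
      else if d=1 then q$1 - a \<le> 1 \<and> 1 - (q$1 - a) \<le> q$2 - b \<and> 1 - (q$1 - a) \<le> 1 - (q$2 - b)
      else if d=2 then q$2 - b \<le> 1 \<and> 1 - (q$2 - b) \<le> q$1 - a \<and> 1 - (q$2 - b) \<le> 1 - (q$1 - a)
      else 0 \<le> q$1 - a \<and> q$1 - a \<le> q$2 - b \<and> q$1 - a \<le> 1 - (q$2 - b))}"

definition Oop :: "int \<Rightarrow> int \<Rightarrow> nat \<Rightarrow> (real^2) set" where
  "Oop a b d = {q. (if d=0 then 0 < q$2 - b \<and> q$2 - b < q$1 - a \<and> q$2 - b < 1 - (q$1 - a)
      else if d=1 then q$1 - a < 1 \<and> 1 - (q$1 - a) < q$2 - b \<and> 1 - (q$1 - a) < 1 - (q$2 - b)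
      else if d=2 then q$2 - b < 1 \<and> 1 - (q$2 - b) < q$1 - a \<and> 1 - (q$2 - b) < 1 - (q$1 - a)
      else 0 < q$1 - a \<and> q$1 - a < q$2 - b \<and> q$1 - a < 1 - (q$2 - b))}"

lemma Oop_open: "open (Oop a b d)"
  unfolding Oop_def
  by (cases "d=0"; cases "d=1"; cases "d=2"; simp;
      intro open_Collect_conj open_Collect_less continuous_intros)

lemma hull3_pt:
  "pt x y \<in> convex hull {pt x1 y1, pt x2 y2, pt x3 y3} \<longleftrightarrow>
   (\<exists>u v. 0 \<le> u \<and> 0 \<le> v \<and> u + v \<le> 1 \<and> x = x1 + u*(x2-x1) + v * (x3-x1) \<and> y = y1 + u*(y2-y1) + v * (y3-y1))"
  unfolding convex_hull_3_alt by (auto simp: pt_def vec_eq_iff forall_2)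

lemma pt_eta: "q = pt (q$1) (q$2)"
  unfolding vec_eq_iff forall_2 pt_def by simp

lemma M_tri_0: "M_triangle a b 0 = convex hull {pt a b, pt (a+1) b, pt (a+1/2) (b+1/2)}"
  unfolding M_triangle_def Let_def by simp
lemma M_tri_1: "M_triangle a b 1 = convex hull {pt (a+1) b, pt (a+1) (b+1), pt (a+1/2) (b+1/2)}"
  unfolding M_triangle_def Let_def by simp
lemma M_tri_2: "M_triangle a b 2 = convex hull {pt (a+1) (b+1), pt a (b+1), pt (a+1/2) (b+1/2)}"
  unfolding M_triangle_def Let_def by simp
lemma M_tri_3: "d \<noteq> 0 \<Longrightarrow> d \<noteq> 1 \<Longrightarrow> d \<noteq> 2 \<Longrightarrow>
   M_triangle a b d = convex hull {pt a (b+1), pt a b, pt (a+1/2) (b+1/2)}"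
  unfolding M_triangle_def Let_def by simp

lemma tri_sub_Ccl: "M_triangle a b d \<subseteq> Ccl a b d"
proof
  fix q assume q: "q \<in> M_triangle a b d"
  have q': "pt (q$1) (q$2) \<in> M_triangle a b d" using q pt_eta by metis
  show "q \<in> Ccl a b d"
  proof (cases "d=0")
    case True then show ?thesis using q' unfolding M_tri_0 hull3_pt Ccl_def True by auto
  next
    case F0: False
    show ?thesis
    proof (cases "d=1")
      case True then show ?thesis using q' unfolding M_tri_1 hull3_pt Ccl_def True by auto
    next
      case F1: False
      show ?thesis
      proof (cases "d=2")
        case True then show ?thesis using q' unfolding M_tri_2 hull3_pt Ccl_def True by auto
      next
        case F2: False
        then show ?thesis using q' F0 F1 unfolding M_tri_3[OF F0 F1 F2] hull3_pt Ccl_def by auto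
      qed
    qed
  qed
qed

lemma Oop_sub_tri: "Oop a b d \<subseteq> M_triangle a b d"
proof
  fix q assume q: "q \<in> Oop a b d"
  define X where "X = q$1 - a"
  define Y where "Y = q$2 - b"
  have qe: "q = pt (a + X) (b + Y)"
    unfolding vec_eq_iff forall_2 pt_def X_def Y_def by simp
  show "q \<in> M_triangle a b d"
  proof (cases "d=0")
    case True
    then have h: "0 < Y" "Y < X" "Y < 1 - X" using q by (auto simp: Oop_def X_def Y_def)
    show ?thesis unfolding True M_tri_0 qe hull3_pt
      apply (rule exI[of _ "X - Y"], rule exI[of _ "2*Y"])
      using h by (auto simp: algebra_simps)
  next
    case F0: False
    show ?thesis
    proof (cases "d=1")
      case True
      then have h: "X < 1" "1 - X < Y" "1 - X < 1 - Y" using q by (auto simp: Oop_def X_def Y_def)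
      show ?thesis unfolding True M_tri_1 qe hull3_pt
        apply (rule exI[of _ "Y - (1 - X)"], rule exI[of _ "2*(1-X)"])
        using h by (auto simp: algebra_simps)
    next
      case F1: False
      show ?thesis
      proof (cases "d=2")
        case True
        then have h: "Y < 1" "1 - Y < X" "1 - Y < 1 - X" using q F0 by (auto simp: Oop_def X_def Y_def)
        show ?thesis unfolding True M_tri_2 qe hull3_pt
          apply (rule exI[of _ "Y - X"], rule exI[of _ "2*(1-Y)"])
          using h by (auto simp: algebra_simps)
      next
        case F2: False
        then have h: "0 < X" "X < Y" "X < 1 - Y" using q F0 F1 by (auto simp: Oop_def X_def Y_def)
        show ?thesis unfolding M_tri_3[OF F0 F1 F2] qe hull3_pt
          apply (rule exI[of _ "1 - Y - X"], rule exI[of _ "2*X"])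
          using h by (auto simp: algebra_simps)
      qed
    qed
  qed
qed

lemma Oop_Ccl_unique:
  assumes "q \<in> Oop a b d" "q \<in> Ccl a' b' d'" "d < 4" "d' < 4"
  shows "a = a' \<and> b = b' \<and> d = d'"
proof -
  have sq: "a < q$1 \<and> q$1 < a + 1 \<and> b < q$2 \<and> q$2 < b + 1"
    using assms(1) unfolding Oop_def
    by (cases "d=0"; cases "d=1"; cases "d=2"; simp; linarith)
  have sq': "a' \<le> q$1 \<and> q$1 \<le> a' + 1 \<and> b' \<le> q$2 \<and> q$2 \<le> b' + 1"
    using assms(2) unfolding Ccl_def
    by (cases "d'=0"; cases "d'=1"; cases "d'=2"; simp; linarith)
  have "real_of_int a < real_of_int a' + 1" "real_of_int a' < real_of_int a + 1"
    using sq sq' by linarith+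
  then have aa: "a = a'" by linarith
  have "real_of_int b < real_of_int b' + 1" "real_of_int b' < real_of_int b + 1"
    using sq sq' by linarith+
  then have bb: "b = b'" by linarith
  have "d = d'"
    using assms unfolding aa bb Oop_def Ccl_def
    by (cases "d=0"; cases "d=1"; cases "d=2"; cases "d'=0"; cases "d'=1"; cases "d'=2"; simp; linarith)
  then show ?thesis using aa bb by simp
qed

definition inW :: "real^2 \<Rightarrow> bool" where
  "inW w \<longleftrightarrow> (\<bar>w$1\<bar> = 1/2 \<and> \<bar>w$2\<bar> = 1/4) \<or> (\<bar>w$1\<bar> = 1/4 \<and> \<bar>w$2\<bar> = 1/2)"

lemma sel_tri:
  fixes w1 w2 :: real and m n :: int
  assumes "(\<bar>w1\<bar> = 1/2 \<and> \<bar>w2\<bar> = 1/4) \<or> (\<bar>w1\<bar> = 1/4 \<and> \<bar>w2\<bar> = 1/2)"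
  shows "\<exists>a b d. d < (4::nat) \<and> (\<forall>e. 0 < e \<and> e \<le> 1 \<longrightarrow> pt (m + e*w1) (n + e*w2) \<in> Oop a b d)"
proof -
  have "(w1 = 1/2 \<and> w2 = 1/4) \<or> (w1 = -1/2 \<and> w2 = 1/4) \<or> (w1 = 1/2 \<and> w2 = -1/4) \<or> (w1 = -1/2 \<and> w2 = -1/4)
      \<or> (w1 = 1/4 \<and> w2 = 1/2) \<or> (w1 = -1/4 \<and> w2 = 1/2) \<or> (w1 = 1/4 \<and> w2 = -1/2) \<or> (w1 = -1/4 \<and> w2 = -1/2)"
    using assms by (auto simp: abs_if split: if_splits)
  then show ?thesis
  proof (elim disjE conjE)
    assume h: "w1 = 1/2" "w2 = 1/4" show ?thesis unfolding h
      by (rule exI[of _ m], rule exI[of _ n], rule exI[of _ 0]) (auto simp: Oop_def pt_def)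
  next
    assume h: "w1 = -1/2" "w2 = 1/4" show ?thesis unfolding h
      by (rule exI[of _ "m-1"], rule exI[of _ n], rule exI[of _ 0]) (auto simp: Oop_def pt_def)
  next
    assume h: "w1 = 1/2" "w2 = -1/4" show ?thesis unfolding h
      by (rule exI[of _ m], rule exI[of _ "n-1"], rule exI[of _ 2]) (auto simp: Oop_def pt_def)
  next
    assume h: "w1 = -1/2" "w2 = -1/4" show ?thesis unfolding h
      by (rule exI[of _ "m-1"], rule exI[of _ "n-1"], rule exI[of _ 2]) (auto simp: Oop_def pt_def)
  next
    assume h: "w1 = 1/4" "w2 = 1/2" show ?thesis unfolding h
      by (rule exI[of _ m], rule exI[of _ n], rule exI[of _ 3]) (auto simp: Oop_def pt_def)
  next
    assume h: "w1 = -1/4" "w2 = 1/2" show ?thesis unfolding h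
      by (rule exI[of _ "m-1"], rule exI[of _ n], rule exI[of _ 1]) (auto simp: Oop_def pt_def)
  next
    assume h: "w1 = 1/4" "w2 = -1/2" show ?thesis unfolding h
      by (rule exI[of _ m], rule exI[of _ "n-1"], rule exI[of _ 3]) (auto simp: Oop_def pt_def)
  next
    assume h: "w1 = -1/4" "w2 = -1/2" show ?thesis unfolding h
      by (rule exI[of _ "m-1"], rule exI[of _ "n-1"], rule exI[of _ 1]) (auto simp: Oop_def pt_def)
  qed
qed

lemma polyform_step:
  assumes P: "M_polyform P" and x: "x \<in> P" "lattice_point x" and w: "inW w"
  shows "x + w \<in> P"
proof -
  obtain F where F: "finite F" "F \<subseteq> M_triangles" "P = interior (\<Union>F)"
    using P unfolding M_polyform_def by blast
  obtain r where r: "r > 0" "ball x r \<subseteq> \<Union>F"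
    using x(1) F(3) by (meson mem_interior)
  obtain m n where mn: "x$1 = of_int m" "x$2 = of_int n"
    using x(2) unfolding lattice_point_def by (meson Ints_cases)
  obtain a b d where abd: "d < (4::nat)" "\<And>e. 0 < e \<Longrightarrow> e \<le> 1 \<Longrightarrow> pt (m + e*w$1) (n + e*w$2) \<in> Oop a b d"
    using sel_tri[of "w$1" "w$2" m n] w unfolding inW_def by blast
  have xe: "\<And>e. x + e *\<^sub>R w = pt (m + e*w$1) (n + e*w$2)"
    using mn unfolding vec_eq_iff forall_2 pt_def by simp
  define e where "e = min 1 (r/2)"
  have e: "0 < e" "e \<le> 1" "e < r" using r(1) unfolding e_def by auto
  have nw: "norm w \<le> 3/4"
  proof -
    have "norm w \<le> \<bar>w$1\<bar> + \<bar>w$2\<bar>" using norm_le_l1_cart[of w] by (simp add: sum_2)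
    then show ?thesis using w unfolding inW_def by auto
  qed
  have "norm (e *\<^sub>R w) < r"
  proof -
    have "norm (e *\<^sub>R w) = e * norm w" using e by simp
    moreover have "e * norm w \<le> e * 1" using nw e by (intro mult_left_mono) auto
    ultimately show ?thesis using e by linarith
  qed
  then have "x + e *\<^sub>R w \<in> ball x r" by (simp add: dist_norm)
  then have q: "x + e *\<^sub>R w \<in> \<Union>F" using r by blast
  then obtain T where T: "T \<in> F" "x + e *\<^sub>R w \<in> T" by blast
  then obtain a' b' d' where T': "T = M_triangle a' b' d'" "d' < 4" using F(2) unfolding M_triangles_def by blast
  have "x + e *\<^sub>R w \<in> Ccl a' b' d'" using T T' tri_sub_Ccl by blast
  moreover have "x + e *\<^sub>R w \<in> Oop a b d" using abd(2)[OF e(1,2)] xe by simp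
  ultimately have "a = a' \<and> b = b' \<and> d = d'" using Oop_Ccl_unique abd(1) T'(2) by blast
  then have "Oop a b d \<subseteq> \<Union>F" using Oop_sub_tri T T' by blast
  then have "Oop a b d \<subseteq> P" using F(3) Oop_open interior_maximal by blast
  moreover have "x + w \<in> Oop a b d" using abd(2)[of 1] xe[of 1] by simp
  ultimately show ?thesis by blast
qed

lemma spm_cases:
  assumes "signed_perm_matrix A"
  shows "\<exists>s1 s2. (s1 = 1 \<or> s1 = -1) \<and> (s2 = 1 \<or> s2 = -1) \<and>
     ((\<forall>x. A *v x = pt (s1 * x$1) (s2 * x$2)) \<or> (\<forall>x. A *v x = pt (s1 * x$2) (s2 * x$1)))"
proof -
  obtain p s where ps: "p permutes (UNIV :: 2 set)" "\<forall>i. s i = 1 \<or> s i = -1"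
    "\<forall>i j. A $ i $ j = (if j = p i then s i else 0)"
    using assms unfolding signed_perm_matrix_def by blast
  have inj: "p 1 \<noteq> p 2" using permutes_inj[OF ps(1)] by (metis inj_eq one_neq_zero numeral_2_eq_2 exhaust_2 vector_2(1) vector_2(2))
  have comp: "\<And>x i. (A *v x) $ i = s i * x $ p i"
  proof -
    fix x i
    have e: "(A *v x) $ i = A$i$1 * x$1 + A$i$2 * x$2"
      unfolding matrix_vector_mult_def by (simp add: sum_2)
    have "p i = 1 \<or> p i = 2" using exhaust_2 by blast
    moreover have "(1::2) \<noteq> 2" by simp
    ultimately show "(A *v x) $ i = s i * x $ p i" unfolding e using ps(3) by auto
  qed
  have Av: "\<And>x. A *v x = pt (s 1 * x $ p 1) (s 2 * x $ p 2)"
    unfolding vec_eq_iff forall_2 pt_def using comp by simp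
  have "(p 1 = 1 \<and> p 2 = 2) \<or> (p 1 = 2 \<and> p 2 = 1)" using inj exhaust_2 by metis
  then show ?thesis using ps(2) Av by (metis)
qed

lemma int_sq1: "(di::int)^2 + dj^2 = 1 \<Longrightarrow> (dj = 0 \<and> (di = 1 \<or> di = -1)) \<or> (di = 0 \<and> (dj = 1 \<or> dj = -1))"
  by (smt (verit, ccfv_SIG) power2_eq_1_iff power2_less_0 zero_less_power2)

lemma aut_form:
  assumes "M_automorphism g"
  shows "\<exists>s1 s2 t1 t2. (s1 = 1 \<or> s1 = -1) \<and> (s2 = 1 \<or> s2 = -1) \<and> t1 \<in> \<int> \<and> t2 \<in> \<int> \<and>
     ((\<forall>x. g x = pt (s1 * x$1 + t1) (s2 * x$2 + t2)) \<or> (\<forall>x. g x = pt (s1 * x$2 + t1) (s2 * x$1 + t2)))"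
proof -
  obtain A t where At: "signed_perm_matrix A" "lattice_point t" "g = (\<lambda>x. A *v x + t)"
    using assms unfolding M_automorphism_def by blast
  obtain s1 s2 where s: "s1 = 1 \<or> s1 = -1" "s2 = 1 \<or> s2 = -1"
     "(\<forall>x. A *v x = pt (s1 * x$1) (s2 * x$2)) \<or> (\<forall>x. A *v x = pt (s1 * x$2) (s2 * x$1))"
    using spm_cases[OF At(1)] by blast
  have t: "t$1 \<in> \<int>" "t$2 \<in> \<int>" using At(2) unfolding lattice_point_def by auto
  have tt: "\<And>u v. pt u v + t = pt (u + t$1) (v + t$2)"
    unfolding vec_eq_iff forall_2 pt_def by simp
  show ?thesis
    apply (rule exI[of _ s1], rule exI[of _ s2], rule exI[of _ "t$1"], rule exI[of _ "t$2"])
    using s t At(3) tt by auto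
qed

lemma aut_open:
  assumes "M_automorphism g" "open S"
  shows "open (g ` S)"
proof -
  obtain A t where At: "signed_perm_matrix A" "lattice_point t" "g = (\<lambda>x. A *v x + t)"
    using assms unfolding M_automorphism_def by blast
  obtain s1 s2 where s: "s1 = 1 \<or> s1 = -1" "s2 = 1 \<or> s2 = -1"
     "(\<forall>x. A *v x = pt (s1 * x$1) (s2 * x$2)) \<or> (\<forall>x. A *v x = pt (s1 * x$2) (s2 * x$1))"
    using spm_cases[OF At(1)] by blast
  have ss: "s1 * s1 = 1" "s2 * s2 = 1" using s by auto
  have surj: "surj (\<lambda>x. A *v x)"
  proof -
    { fix y :: "real^2"
      have "\<exists>x. A *v x = y"
        using s(3)
      proof
        assume h: "\<forall>x. A *v x = pt (s1 * x$1) (s2 * x$2)"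
        show ?thesis
          by (rule exI[of _ "pt (s1 * y$1) (s2 * y$2)"])
             (simp add: h pt_def vec_eq_iff forall_2 mult.assoc[symmetric] ss)
      next
        assume h: "\<forall>x. A *v x = pt (s1 * x$2) (s2 * x$1)"
        show ?thesis
          by (rule exI[of _ "pt (s2 * y$2) (s1 * y$1)"])
             (simp add: h pt_def vec_eq_iff forall_2 mult.assoc[symmetric] ss)
      qed }
    then show ?thesis by (metis surjI)
  qed
  have "open ((\<lambda>x. A *v x) ` S)"
    by (rule open_surjective_linear_image[OF assms(2) matrix_vector_mul_linear surj])
  then have "open ((\<lambda>z. t + z) ` ((\<lambda>x. A *v x) ` S))" by (rule open_translation)
  moreover have "(\<lambda>z. t + z) ` ((\<lambda>x. A *v x) ` S) = g ` S"
    unfolding At(3) image_image by (simp add: add.commute)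
  ultimately show ?thesis by simp
qed

lemma tile_step:
  assumes P: "M_polyform PA" and g: "M_automorphism g"
    and y: "y \<in> g ` PA" "lattice_point y" and w: "inW w"
  shows "y + w \<in> g ` PA"
proof -
  obtain s1 s2 t1 t2 where st: "s1 = 1 \<or> s1 = -1" "s2 = 1 \<or> s2 = -1" "t1 \<in> \<int>" "t2 \<in> \<int>"
     "(\<forall>x. g x = pt (s1 * x$1 + t1) (s2 * x$2 + t2)) \<or> (\<forall>x. g x = pt (s1 * x$2 + t1) (s2 * x$1 + t2))"
    using aut_form[OF g] by blast
  have ss: "s1 * s1 = 1" "s2 * s2 = 1" using st by auto
  obtain x where x: "x \<in> PA" "y = g x" using y(1) by blast
  have yi: "y$1 \<in> \<int>" "y$2 \<in> \<int>" using y(2) unfolding lattice_point_def by auto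
  have sI: "s1 \<in> \<int>" "s2 \<in> \<int>" using st by auto
  show ?thesis using st(5)
  proof
    assume h: "\<forall>x. g x = pt (s1 * x$1 + t1) (s2 * x$2 + t2)"
    have c: "y$1 = s1 * x$1 + t1" "y$2 = s2 * x$2 + t2" using x h by (auto simp: pt_def)
    have "x$1 = s1 * (y$1 - t1)" "x$2 = s2 * (y$2 - t2)"
      using c by (auto simp: algebra_simps mult.assoc[symmetric] ss)
    then have "lattice_point x" unfolding lattice_point_def forall_2
      using yi sI st(3,4) by auto
    moreover have wI: "inW (pt (s1 * w$1) (s2 * w$2))"
      using w st(1,2) unfolding inW_def pt_def by (auto simp: abs_mult)
    ultimately have "x + pt (s1 * w$1) (s2 * w$2) \<in> PA" using polyform_step[OF P x(1)] by blast
    moreover have "g (x + pt (s1 * w$1) (s2 * w$2)) = y + w"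
      using h c unfolding vec_eq_iff forall_2 by (auto simp: pt_def algebra_simps mult.assoc[symmetric] ss)
    ultimately show ?thesis by (metis image_eqI)
  next
    assume h: "\<forall>x. g x = pt (s1 * x$2 + t1) (s2 * x$1 + t2)"
    have c: "y$1 = s1 * x$2 + t1" "y$2 = s2 * x$1 + t2" using x h by (auto simp: pt_def)
    have "x$2 = s1 * (y$1 - t1)" "x$1 = s2 * (y$2 - t2)"
      using c by (auto simp: algebra_simps mult.assoc[symmetric] ss)
    then have "lattice_point x" unfolding lattice_point_def forall_2
      using yi sI st(3,4) by auto
    moreover have wI: "inW (pt (s2 * w$2) (s1 * w$1))"
      using w st(1,2) unfolding inW_def pt_def by (auto simp: abs_mult)
    ultimately have "x + pt (s2 * w$2) (s1 * w$1) \<in> PA" using polyform_step[OF P x(1)] by blast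
    moreover have "g (x + pt (s2 * w$2) (s1 * w$1)) = y + w"
      using h c unfolding vec_eq_iff forall_2 by (auto simp: pt_def algebra_simps mult.assoc[symmetric] ss)
    ultimately show ?thesis by (metis image_eqI)
  qed
qed

lemma dist_lattice:
  assumes "lattice_point x" "lattice_point y" "dist x y = 1"
  shows "\<exists>d::int. (y = x + pt (of_int d) 0 \<or> y = x + pt 0 (of_int d)) \<and> (d = (1::int) \<or> d = -1)"
proof -
  obtain di where di: "y$1 - x$1 = of_int di"
    using assms(1,2) unfolding lattice_point_def by (meson Ints_diff Ints_cases)
  obtain dj where dj: "y$2 - x$2 = of_int dj"
    using assms(1,2) unfolding lattice_point_def by (meson Ints_diff Ints_cases)
  have "sqrt ((x$1 - y$1)^2 + (x$2 - y$2)^2) = 1"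
    using assms(3) unfolding dist_vec_def L2_set_def sum_2 dist_real_def by simp
  then have "(x$1 - y$1)^2 + (x$2 - y$2)^2 = 1"
    by (metis real_sqrt_eq_1_iff)
  then have "(real_of_int di)^2 + (real_of_int dj)^2 = 1"
    using di dj by (metis minus_diff_eq power2_minus)
  then have "di^2 + dj^2 = 1" by (metis of_int_eq_1_iff of_int_add of_int_power)
  then have cs: "(dj = 0 \<and> (di = 1 \<or> di = -1)) \<or> (di = 0 \<and> (dj = 1 \<or> dj = -1))" by (rule int_sq1)
  then show ?thesis
  proof
    assume h: "dj = 0 \<and> (di = 1 \<or> di = -1)"
    have "y = x + pt (of_int di) 0" using di dj h unfolding vec_eq_iff forall_2 pt_def by auto
    then show ?thesis using h by blast
  next
    assume h: "di = 0 \<and> (dj = 1 \<or> dj = -1)"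
    have "y = x + pt 0 (of_int dj)" using di dj h unfolding vec_eq_iff forall_2 pt_def by auto
    then show ?thesis using h by blast
  qed
qed

theorem corollary3:
  fixes PA PB :: "(real^2) set"
    and dirn :: "(real^2) set \<Rightarrow> (real^2) \<times> (real^2)"
    and col :: "(real^2) set \<Rightarrow> 'c"
    and k :: nat and g :: "nat \<Rightarrow> real^2 \<Rightarrow> real^2"
  assumes "convex_M_polyform PA" and "convex_M_polyform PB"
    and "DC_tiling PA dirn col PB k g"
  shows "lattice_pts PB - (lattice_pts PB - (\<Union>i<k. lattice_pts (g i ` PA)))
           = (\<Union>i<k. lattice_pts (g i ` PA)) \<and>
         (\<forall>i<k. \<forall>j<k. i \<noteq> j \<longrightarrow>
           (\<forall>x\<in>lattice_pts (g i ` PA). \<forall>y\<in>lattice_pts (g j ` PA). dist x y \<noteq> 1))"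
proof -
  have PA: "M_polyform PA" and PB: "M_polyform PB" "convex PB"
    using assms(1,2) unfolding convex_M_polyform_def by auto
  have oA: "open PA" using PA unfolding M_polyform_def by auto
  have oB: "open PB" using PB unfolding M_polyform_def by auto
  have aut: "\<And>i. i < k \<Longrightarrow> M_automorphism (g i)"
    and disj: "\<And>i j. i < k \<Longrightarrow> j < k \<Longrightarrow> i \<noteq> j \<Longrightarrow> g i ` PA \<inter> g j ` PA = {}"
    and cov: "(\<Union>i<k. closure (g i ` PA)) = closure PB"
    using assms(3) unfolding DC_tiling_def by auto
  have sub: "g i ` PA \<subseteq> PB" if i: "i < k" for i
  proof -
    have o: "open (g i ` PA)" using aut_open[OF aut[OF i] oA] .
    have "closure (g i ` PA) \<subseteq> closure PB" using cov i by blast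
    then have "interior (closure (g i ` PA)) \<subseteq> interior (closure PB)" by (rule interior_mono)
    moreover have "g i ` PA \<subseteq> interior (closure (g i ` PA))"
      using o by (simp add: closure_subset interior_maximal)
    moreover have "interior (closure PB) = PB"
      using convex_interior_closure[OF PB(2)] oB interior_open by metis
    ultimately show ?thesis by blast
  qed
  have part1: "lattice_pts PB - (lattice_pts PB - (\<Union>i<k. lattice_pts (g i ` PA)))
           = (\<Union>i<k. lattice_pts (g i ` PA))"
    using sub unfolding lattice_pts_def by blast
  have part2: "dist x y \<noteq> 1"
    if ij: "i < k" "j < k" "i \<noteq> j" and x: "x \<in> lattice_pts (g i ` PA)" and y: "y \<in> lattice_pts (g j ` PA)"
    for i j x y
  proof
    assume d1: "dist x y = 1"
    have xl: "x \<in> g i ` PA" "lattice_point x" and yl: "y \<in> g j ` PA" "lattice_point y"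
      using x y unfolding lattice_pts_def by auto
    obtain d :: int where d: "y = x + pt (of_int d) 0 \<or> y = x + pt 0 (of_int d)" "d = (1::int) \<or> d = -1"
      using dist_lattice[OF xl(2) yl(2) d1] by blast
    obtain w w' where ww: "inW w" "inW w'" "x + w = y + w'"
      using d(1)
    proof
      assume h: "y = x + pt (of_int d) 0"
      show ?thesis
        apply (rule that[of "pt (d/2) (1/4)" "pt (-d/2) (1/4)"])
        using d(2) h by (auto simp: inW_def pt_def vec_eq_iff forall_2)
    next
      assume h: "y = x + pt 0 (of_int d)"
      show ?thesis
        apply (rule that[of "pt (1/4) (d/2)" "pt (1/4) (-d/2)"])
        using d(2) h by (auto simp: inW_def pt_def vec_eq_iff forall_2)
    qed
    have "x + w \<in> g i ` PA" using tile_step[OF PA aut[OF ij(1)] xl ww(1)] .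
    moreover have "y + w' \<in> g j ` PA" using tile_step[OF PA aut[OF ij(2)] yl ww(2)] .
    ultimately show False using disj[OF ij] ww(3) by auto
  qed
  show ?thesis using part1 part2 by blast
qed
end
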